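(* Let $f:\mathbb{R}^n\times\mathbb{R}\to\mathbb{R}^n$ be $C^1$, let $\lambda_-<\lambda_+$, let $\Lambda$ be a parameter shift from $\lambda_-$ to $\lambda_+$, and let $r>0$. Let $\Phi$ be the solution cocycle of $\dot x=f(x,\Lambda(rt))$ and $\phi_-$ the flow of $\dot x=f(x,\lambda_-)$. Assume $A_-$ is an asymptotically stable attractor for $\phi_-$. Then there is $\tilde\eta>0$ such that for all $\eta\in(0,\tilde\eta]$ and all $\delta>0$ there exist $\tau>0$ and $\tilde\tau>0$ such that $$\Phi(t,s,\mathcal{N}_\eta(A_-))\subset\mathcal{N}_\delta(A_-)$$ for all $t,s$ with $s<t-\tilde\tau$ and $t<-\tau$.
   Context: A parameter shift from $\lambda_-$ to $\lambda_+$ is a smooth $\Lambda:\mathbb{R}\to(\lambda_-,\lambda_+)$ with $\lim_{\tau\to\pm\infty}\Lambda(\tau)=\lambda_\pm$ and $\lim_{\tau\to\pm\infty}\Lambda'(\tau)=0$. Solutions are assumed to exist for all time; $\Phi(t,s,x_0)$ is the value at time $t$ of the solution with $x(s)=x_0$. For nonempty compact $X,Y$, $d(X,Y)=\sup_{x\in X}\inf_{y\in Y}\|x-y\|$ and $\mathcal{N}_\eta(M)=\{x: d(x,M)<\eta\}$. A compact $\phi_-$-invariant set $M$ is asymptotically stable if (i) for every $\epsilon>0$ there is $\delta>0$ with $d(\phi_-(t,y),M)<\epsilon$ for all $t>0$, $y\in\mathcal{N}_\delta(M)$, and (ii) there is $\eta>0$ with $\lim_{t\to\infty}d(\phi_-(t,y),M)=0$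 for all $y\in\mathcal{N}_\eta(M)$. *)

theory Defs
  imports "HOL-Analysis.Analysis"
begin

definition C1_map :: "('a::real_normed_vector \<Rightarrow> 'b::real_normed_vector) \<Rightarrow> bool" where
  "C1_map f \<longleftrightarrow> (\<exists>f' :: 'a \<Rightarrow> 'a \<Rightarrow>\<^sub>L 'b.
      (\<forall>z. (f has_derivative blinfun_apply (f' z)) (at z)) \<and> continuous_on UNIV f')"

definition smooth_real :: "(real \<Rightarrow> real) \<Rightarrow> bool" where
  "smooth_real g \<longleftrightarrow> (\<forall>k x. ((deriv ^^ k) g) differentiable (at x))"

definition parameter_shift :: "(real \<Rightarrow> real) \<Rightarrow> real \<Rightarrow> real \<Rightarrow> bool" where
  "parameter_shift \<Lambda> lm lp \<longleftrightarrow>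
     smooth_real \<Lambda> \<and> (\<forall>\<tau>. \<Lambda> \<tau> \<in> {lm<..<lp}) \<and>
     (\<Lambda> \<longlongrightarrow> lm) at_bot \<and> (\<Lambda> \<longlongrightarrow> lp) at_top \<and>
     (deriv \<Lambda> \<longlongrightarrow> 0) at_bot \<and> (deriv \<Lambda> \<longlongrightarrow> 0) at_top"

definition semidist :: "'a::metric_space set \<Rightarrow> 'a set \<Rightarrow> real" where
  "semidist X Y = (SUP x\<in>X. infdist x Y)"

definition nbhd :: "real \<Rightarrow> 'a::metric_space set \<Rightarrow> 'a set" where
  "nbhd \<eta> M = {x. semidist {x} M < \<eta>}"

definition is_solution_cocycle :: "(real \<Rightarrow> 'a \<Rightarrow> 'a::real_normed_vector) \<Rightarrow> (real \<Rightarrow> real \<Rightarrow> 'a \<Rightarrow> 'a) \<Rightarrow> bool" where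
  "is_solution_cocycle g \<Phi> \<longleftrightarrow> (\<forall>s x0. \<Phi> s s x0 = x0 \<and>
      (\<forall>t. ((\<lambda>t. \<Phi> t s x0) has_vector_derivative g t (\<Phi> t s x0)) (at t)))"

definition is_flow :: "('a::real_normed_vector \<Rightarrow> 'a) \<Rightarrow> (real \<Rightarrow> 'a \<Rightarrow> 'a) \<Rightarrow> bool" where
  "is_flow h \<phi> \<longleftrightarrow> (\<forall>y. \<phi> 0 y = y \<and>
      (\<forall>t. ((\<lambda>t. \<phi> t y) has_vector_derivative h (\<phi> t y)) (at t)))"

definition asymptotically_stable :: "(real \<Rightarrow> 'a::metric_space \<Rightarrow> 'a) \<Rightarrow> 'a set \<Rightarrow> bool" where
  "asymptotically_stable \<phi> M \<longleftrightarrow>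
     M \<noteq> {} \<and> compact M \<and> (\<forall>t. \<phi> t ` M = M) \<and>
     (\<forall>\<epsilon>>0. \<exists>\<delta>>0. \<forall>t>0. \<forall>y\<in>nbhd \<delta> M. semidist {\<phi> t y} M < \<epsilon>) \<and>
     (\<exists>\<eta>>0. \<forall>y\<in>nbhd \<eta> M. ((\<lambda>t. semidist {\<phi> t y} M) \<longlongrightarrow> 0) at_top)"

end

theory Submission
  imports Defs
begin


lemma gronwall_core:
  fixes X Y :: "real \<Rightarrow> 'a::real_normed_vector"
  assumes ab: "a \<le> b" and C: "C > 0" and e: "0 \<le> e" "e \<le> C" and L: "0 \<le> L"
  and dX: "\<And>t. (X has_vector_derivative F t (X t)) (at t)"
  and dY: "\<And>t. (Y has_vector_derivative G t (Y t)) (at t)"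
  and lip: "\<And>t p. t \<in> {a..b} \<Longrightarrow> norm (p - Y t) \<le> \<rho> \<Longrightarrow> norm (F t p - G t (Y t)) \<le> L * norm (p - Y t) + e"
  and init: "norm (X a - Y a) < C"
  and rho: "C * exp ((L+2)*(b-a)) \<le> \<rho>"
  and t: "t \<in> {a..b}"
  shows "norm (X t - Y t) < C * exp ((L+2)*(t-a))"
proof -
  define D where "D = (\<lambda>t. X t - Y t)"
  define B where "B = (\<lambda>t. C * exp ((L+2)*(t-a)))"
  have dD: "(D has_vector_derivative (F t (X t) - G t (Y t))) (at t)" for t
    unfolding D_def by (intro has_vector_derivative_diff dX dY)
  have dB: "(B has_real_derivative ((L+2) * B t)) (at t)" for t
    unfolding B_def by (auto intro!: derivative_eq_intros)
  have contD: "continuous_on UNIV D"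
    using dD has_vector_derivative_continuous continuous_at_imp_continuous_on by blast
  have contB: "continuous_on UNIV B"
    unfolding B_def by (intro continuous_intros)
  have Bge: "B u \<ge> C" if "u \<ge> a" for u
    unfolding B_def using C L that by simp
  have Bmono: "B u \<le> B v" if "u \<le> v" for u v
    unfolding B_def using C L that by (simp add: mult_left_mono)
  show ?thesis
  proof (rule ccontr)
    assume nt: "\<not> ?thesis"
    define S where "S = {a..b} \<inter> {t. B t \<le> norm (D t)}"
    have Sne: "S \<noteq> {}" using nt t unfolding S_def B_def D_def by auto
    have Sbdd: "bdd_below S" unfolding S_def by auto
    have Scl: "closed S" unfolding S_def
      by (intro closed_Int closed_atLeastAtMost closed_Collect_le contB continuous_on_norm contD)
    define t1 where "t1 = Inf S"
    have t1S: "t1 \<in> S" unfolding t1_def using closed_contains_Inf[OF Sne Sbdd Scl] .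
    have aS: "a \<notin> S" using init unfolding S_def B_def D_def by auto
    have at1: "a < t1" using t1S aS unfolding S_def by (metis IntD1 atLeastAtMost_iff order_le_less)
    have t1b: "t1 \<le> b" using t1S unfolding S_def by auto
    have before: "norm (D u) < B u" if "a \<le> u" "u < t1" for u
    proof -
      have "u \<notin> S" using cInf_lower[OF _ Sbdd, of u] that unfolding t1_def by force
      then show ?thesis using that t1b unfolding S_def by auto
    qed
    have eq: "norm (D t1) \<le> B t1"
    proof (rule ccontr)
      assume "\<not> ?thesis"
      then have pos: "0 < norm (D t1) - B t1" by simp
      have "((\<lambda>u. norm (D u) - B u) \<longlongrightarrow> norm (D t1) - B t1) (at t1)"
        using contD contB by (intro tendsto_intros) (auto simp: continuous_on_def)
      then have "((\<lambda>u. norm (D u) - B u) \<longlongrightarrow> norm (D t1) - B t1) (at_left t1)"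
        by (rule tendsto_mono[rotated]) (simp add: at_le)
      from order_tendstoD(1)[OF this pos] have "eventually (\<lambda>u. 0 < norm (D u) - B u) (at_left t1)" .
      moreover have "eventually (\<lambda>u. u \<in> {a<..<t1}) (at_left t1)" using eventually_at_left_real at1 by blast
      ultimately have "eventually (\<lambda>u. 0 < norm (D u) - B u \<and> u \<in> {a<..<t1}) (at_left t1)"
        by (rule eventually_conj)
      from eventually_happens'[OF _ this] obtain u where "0 < norm (D u) - B u" "u \<in> {a<..<t1}" by auto
      with before[of u] show False by auto
    qed
    define D' where "D' = F t1 (X t1) - G t1 (Y t1)"
    have "norm D' \<le> L * norm (D t1) + e"
      unfolding D'_def D_def
      apply (rule lip)
      using at1 t1b eq Bmono[OF t1b] rho unfolding B_def D_def by auto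
    also have "\<dots> \<le> L * B t1 + e" using eq L by (simp add: mult_left_mono)
    finally have nD': "norm D' \<le> L * B t1 + e" .
    define c where "c = (L+2) * B t1 - norm D'"
    have cpos: "c > 0" using nD' Bge[of t1] at1 e C unfolding c_def by (simp add: algebra_simps)
    have "(D has_derivative (\<lambda>h. h *\<^sub>R D')) (at t1)" using dD[of t1] unfolding D'_def has_vector_derivative_def .
    then obtain d1 where d1: "d1 > 0" "\<And>u. norm (u - t1) < d1 \<Longrightarrow> norm (D u - D t1 - (u - t1) *\<^sub>R D') \<le> c/2 * norm (u - t1)"
      unfolding has_derivative_at_alt using cpos by (meson half_gt_zero)
    have "(B has_derivative (\<lambda>h. h * ((L+2) * B t1))) (at t1)" using dB[of t1] unfolding has_field_derivative_def by (simp add: mult.commute[of _ "(L+2) * B t1"])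
    then obtain d2 where d2: "d2 > 0" "\<And>u. norm (u - t1) < d2 \<Longrightarrow> norm (B u - B t1 - (u - t1) * ((L+2) * B t1)) \<le> c/2 * norm (u - t1)"
      unfolding has_derivative_at_alt using cpos by (meson half_gt_zero)
    define u where "u = t1 - min (min d1 d2) (t1 - a) / 2"
    define m where "m = min (min d1 d2) (t1 - a)"
    have m: "m > 0" "m \<le> t1 - a" "m \<le> d1" "m \<le> d2" using d1(1) d2(1) at1 unfolding m_def by auto
    have um: "u = t1 - m/2" unfolding u_def m_def by simp
    have u1: "a \<le> u" "u < t1" using m unfolding um by linarith+
    have u2: "norm (u - t1) < d1" "norm (u - t1) < d2" using m unfolding um by auto
    have A1: "norm (D u - D t1 - (u - t1) *\<^sub>R D') \<le> c/2 * (t1 - u)" using d1(2)[OF u2(1)] u1 by simp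
    have A2: "\<bar>B u - B t1 - (u - t1) * ((L+2) * B t1)\<bar> \<le> c/2 * (t1 - u)" using d2(2)[OF u2(2)] u1 by simp
    have A3: "norm (D t1) \<le> norm (D u) + (t1 - u) * norm D' + norm (D u - D t1 - (u - t1) *\<^sub>R D')"
    proof -
      have "D t1 = D u - (u - t1) *\<^sub>R D' - (D u - D t1 - (u - t1) *\<^sub>R D')" by simp
      then have "norm (D t1) \<le> norm (D u - (u - t1) *\<^sub>R D') + norm (D u - D t1 - (u - t1) *\<^sub>R D')"
        by (metis norm_triangle_ineq4)
      also have "norm (D u - (u - t1) *\<^sub>R D') \<le> norm (D u) + norm ((u - t1) *\<^sub>R D')" by (rule norm_triangle_ineq4)
      also have "norm ((u - t1) *\<^sub>R D') = (t1 - u) * norm D'" using u1 by simp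
      finally show ?thesis by simp
    qed
    have "norm (D t1) = B t1" using eq t1S unfolding S_def by auto
    then have "B u \<le> norm (D u)"
    proof -
    define k where "k = t1 - u"
    define P where "P = (L+2) * B t1"
    have A2': "B u \<le> B t1 - k * P + c/2 * k"
    proof -
      have "(u - t1) * ((L+2) * B t1) = - (k*P)" unfolding k_def P_def by (simp add: algebra_simps)
      moreover have "c/2 * (t1 - u) = c/2 * k" unfolding k_def ..
      ultimately have "\<bar>B u - B t1 + k*P\<bar> \<le> c/2 * k" using A2 unfolding k_def by simp
      then show ?thesis using abs_ge_self[of "B u - B t1 + k*P"] by linarith
    qed
    have ck: "c * k = P * k - norm D' * k" unfolding c_def P_def by (simp add: algebra_simps)
    have "B u \<le> norm (D u)"
    proof -
      have h1: "c/2 * k = (k*P - norm D' * k)/2" using ck by (simp add: mult.commute)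
      have h2: "(t1 - u) * norm D' = norm D' * k" unfolding k_def by simp
      have h3: "c/2 * (t1 - u) = c/2 * k" unfolding k_def by simp
      obtain Z W V n where ZWV: "Z = c/2*k" "W = k*P" "V = norm D' * k" "n = norm (D u - D t1 - (u - t1) *\<^sub>R D')" by blast
      have a1: "n \<le> Z" using A1 ZWV(1,4) unfolding k_def by (simp only:)
      have a2: "B u \<le> B t1 - W + Z" using A2' ZWV by simp
      have a3: "B t1 \<le> norm (D u) + V + n" using A3 h2 ZWV \<open>norm (D t1) = B t1\<close> by simp
      have a4: "2*Z = W - V" using h1 ZWV by simp
      show ?thesis using a1 a2 a3 a4 by linarith
    qed
    then show ?thesis .
    qed
    with before[OF u1] show False by simp
  qed
qed


lemma compact_uniform:
  fixes K :: "'b::metric_space set" and P :: "real \<Rightarrow> 'b \<Rightarrow> bool"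
  assumes K: "compact K"
    and loc: "\<And>y. y \<in> K \<Longrightarrow> \<exists>\<nu>>0. \<exists>c. \<forall>z\<in>K. dist z y < \<nu> \<longrightarrow> P c z"
    and mono: "\<And>c c' z. c \<le> c' \<Longrightarrow> P c z \<Longrightarrow> P c' z"
  shows "\<exists>c. \<forall>z\<in>K. P c z"
proof -
  obtain \<nu> c where nc: "\<And>y. y \<in> K \<Longrightarrow> \<nu> y > 0 \<and> (\<forall>z\<in>K. dist z y < \<nu> y \<longrightarrow> P (c y) z)"
    using loc by metis
  have "K \<subseteq> (\<Union>y\<in>K. ball y (\<nu> y))" using nc by (auto simp: dist_commute)
  then obtain D where D: "D \<subseteq> K" "finite D" "K \<subseteq> (\<Union>y\<in>D. ball y (\<nu> y))"
    using compactE_image[OF K, of K "\<lambda>y. ball y (\<nu> y)"] by blast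
  define M where "M = Max (insert 0 (c ` D))"
  show ?thesis
  proof (intro exI[of _ M] ballI)
    fix z assume z: "z \<in> K"
    then obtain y where y: "y \<in> D" "z \<in> ball y (\<nu> y)" using D(3) by blast
    then have "P (c y) z" using nc[of y] D(1) z by (auto simp: dist_commute)
    moreover have "c y \<le> M" unfolding M_def using D(2) y(1) by (intro Max_ge) auto
    ultimately show "P M z" using mono by blast
  qed
qed


locale setting =
  fixes f :: "'a::euclidean_space \<times> real \<Rightarrow> 'a" and lm :: real and \<phi> :: "real \<Rightarrow> 'a \<Rightarrow> 'a"
  assumes C1: "C1_map f" and flow: "is_flow (\<lambda>x. f (x, lm)) \<phi>"
begin

lemma f_cont: "continuous_on UNIV f"
proof -
  obtain f' :: "'a \<times> real \<Rightarrow> (('a \<times> real) \<Rightarrow>\<^sub>L 'a)" where d: "\<And>z. (f has_derivative blinfun_apply (f' z)) (at z)"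
    using C1 unfolding C1_map_def by blast
  show ?thesis using d has_derivative_continuous continuous_at_imp_continuous_on by blast
qed

lemma lip: "\<exists>L\<ge>0. \<forall>p\<in>cball 0 R. \<forall>q\<in>cball 0 R. norm (f (p, lm) - f (q, lm)) \<le> L * norm (p - q)"
proof -
  obtain f' :: "'a \<times> real \<Rightarrow> (('a \<times> real) \<Rightarrow>\<^sub>L 'a)" where d: "\<And>z. (f has_derivative blinfun_apply (f' z)) (at z)"
    and c: "continuous_on UNIV f'"
    using C1 unfolding C1_map_def by blast
  have "compact (f' ` (cball 0 R \<times> {lm}))"
    by (rule compact_continuous_image) (auto intro: continuous_on_subset[OF c] compact_Times)
  then obtain M where M: "\<And>z. z \<in> cball 0 R \<times> {lm} \<Longrightarrow> norm (f' z) \<le> M"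
    using compact_imp_bounded bounded_iff by (metis image_eqI)
  have dg: "((\<lambda>p. f (p, lm)) has_derivative (\<lambda>v. f' (p, lm) (v, 0))) (at p within cball 0 R)" for p
  proof -
    have "((\<lambda>p. (p, lm)) has_derivative (\<lambda>v. (v, 0))) (at p within cball 0 R)"
      by (auto intro!: derivative_eq_intros)
    from has_derivative_compose[OF this d] show ?thesis by simp
  qed
  have ob: "onorm (\<lambda>v. f' (p, lm) (v, 0)) \<le> max M 0" if "p \<in> cball 0 R" for p
  proof (rule onorm_le)
    fix v :: 'a
    have "norm (f' (p, lm) (v, 0)) \<le> norm (f' (p, lm)) * norm (v, 0::real)" by (rule norm_blinfun)
    also have "\<dots> \<le> max M 0 * norm v" using M[of "(p, lm)"] that by (simp add: norm_Pair mult_right_mono)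
    finally show "norm (f' (p, lm) (v, 0)) \<le> max M 0 * norm v" .
  qed
  show ?thesis
    by (intro exI[of _ "max M 0"] conjI max.cobounded2 ballI differentiable_bound[OF convex_cball dg ob])
qed

lemma phi0: "\<phi> 0 y = y" using flow unfolding is_flow_def by blast

lemma phid: "((\<lambda>t. \<phi> t y) has_vector_derivative f (\<phi> t y, lm)) (at t)"
  using flow unfolding is_flow_def by blast

lemma phid_shift: "((\<lambda>v. \<phi> (v - a) y) has_vector_derivative f (\<phi> (v - a) y, lm)) (at v)"
proof -
  have "((\<lambda>v. v - a) has_vector_derivative 1) (at v)" by (auto intro!: derivative_eq_intros)
  from vector_diff_chain_at[OF this phid] show ?thesis by (simp add: o_def)
qed

lemma phi_cont: "continuous_on S (\<lambda>t. \<phi> t y)"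
  using phid has_vector_derivative_continuous continuous_at_imp_continuous_on by blast

lemma traj_bound: "\<exists>R. \<forall>t\<in>{a..b}. norm (\<phi> t y) \<le> R"
proof -
  have "compact ((\<lambda>t. \<phi> t y) ` {a..b})" by (intro compact_continuous_image phi_cont compact_Icc)
  then show ?thesis using compact_imp_bounded bounded_iff by (metis image_eqI)
qed

lemma exp_bound:
  fixes L t T c :: real
  assumes "L \<ge> 0" "t \<le> T" "c \<ge> 0"
  shows "c * exp (- ((L+2)*T)) * exp ((L+2)*t) \<le> c"
proof -
  have "exp ((L+2)*t) \<le> exp ((L+2)*T)" using assms by (simp add: mult_left_mono)
  then have "exp (- ((L+2)*T)) * exp ((L+2)*t) \<le> 1"
    by (simp add: mult_exp_exp)
  then show ?thesis using assms(3) by (metis mult.assoc mult_left_mono mult.right_neutral)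
qed

lemma cont_dep:
  assumes T: "T \<ge> 0" and g: "\<gamma> > 0"
  shows "\<exists>\<nu>>0. \<forall>z. norm (z - y) < \<nu> \<longrightarrow> (\<forall>t\<in>{0..T}. norm (\<phi> t z - \<phi> t y) < \<gamma>)"
proof -
  obtain R0 where R0: "\<And>t. t \<in> {0..T} \<Longrightarrow> norm (\<phi> t y) \<le> R0" using traj_bound by blast
  obtain L where L: "L \<ge> 0" "\<And>p q. p \<in> cball 0 (R0+1) \<Longrightarrow> q \<in> cball 0 (R0+1) \<Longrightarrow> norm (f (p, lm) - f (q, lm)) \<le> L * norm (p - q)"
    using lip by blast
  define C where "C = min \<gamma> 1 * exp (- ((L+2)*T))"
  have C: "C > 0" using g unfolding C_def by simp
  have Cb: "C * exp ((L+2)*t) \<le> min \<gamma> 1" if "t \<le> T" for t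
    unfolding C_def using exp_bound[OF L(1) that, of "min \<gamma> 1"] g by simp
  show ?thesis
  proof (intro exI[of _ C] conjI C allI impI ballI)
    fix z t assume z: "norm (z - y) < C" and t: "t \<in> {0..T}"
    have "norm (\<phi> t z - \<phi> t y) < C * exp ((L+2)*(t-0))"
    proof (rule gronwall_core[where F="\<lambda>t p. f (p, lm)" and G="\<lambda>t p. f (p, lm)" and \<rho>=1 and e=0])
      show "0 \<le> T" by fact
      show "(0::real) \<le> 0" by simp
      show "0 \<le> C" using C by simp
      show "((\<lambda>t. \<phi> t z) has_vector_derivative f (\<phi> t z, lm)) (at t)" for t by (rule phid)
      show "((\<lambda>t. \<phi> t y) has_vector_derivative f (\<phi> t y, lm)) (at t)" for t by (rule phid)
      show "norm (f (p, lm) - f (\<phi> t y, lm)) \<le> L * norm (p - \<phi> t y) + 0"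
        if "t \<in> {0..T}" "norm (p - \<phi> t y) \<le> 1" for t p
      proof -
        have "norm p \<le> norm (\<phi> t y) + norm (p - \<phi> t y)" by (metis norm_triangle_sub add.commute)
        then have "p \<in> cball 0 (R0+1)" using R0[OF that(1)] that(2) by simp
        moreover have "\<phi> t y \<in> cball 0 (R0+1)" using R0[OF that(1)] by simp
        ultimately show ?thesis using L(2) by simp
      qed
      show "norm (\<phi> 0 z - \<phi> 0 y) < C" using z by (simp add: phi0)
      show "C * exp ((L+2)*(T-0)) \<le> 1" using Cb[of T] by simp
    qed (use C L t in auto)
    also have "\<dots> \<le> min \<gamma> 1" using Cb[of t] t by simp
    finally show "norm (\<phi> t z - \<phi> t y) < \<gamma>" by simp
  qed
qed


lemma flow_prop:
  assumes s: "s \<ge> 0" and t: "t \<ge> 0"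
  shows "\<phi> t (\<phi> s y) = \<phi> (t + s) y"
proof (rule ccontr)
  assume ne: "\<phi> t (\<phi> s y) \<noteq> \<phi> (t + s) y"
  define d where "d = norm (\<phi> t (\<phi> s y) - \<phi> (t + s) y)"
  have d: "d > 0" using ne unfolding d_def by simp
  obtain R0 where R0: "\<And>u. u \<in> {s..s+t} \<Longrightarrow> norm (\<phi> u y) \<le> R0" using traj_bound by blast
  obtain L where L: "L \<ge> 0" "\<And>p q. p \<in> cball 0 (R0+1) \<Longrightarrow> q \<in> cball 0 (R0+1) \<Longrightarrow> norm (f (p, lm) - f (q, lm)) \<le> L * norm (p - q)"
    using lip by blast
  define C where "C = min d 1 * exp (- ((L+2)*t))"
  have C: "C > 0" using d unfolding C_def by simp
  have Cb: "C * exp ((L+2)*t) \<le> min d 1"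
    unfolding C_def using exp_bound[OF L(1) order_refl, of "min d 1" t] d by simp
  have "norm ((\<lambda>v. \<phi> (v - s) (\<phi> s y)) (s+t) - \<phi> (s+t) y) < C * exp ((L+2)*((s+t)-s))"
  proof (rule gronwall_core[where F="\<lambda>t p. f (p, lm)" and G="\<lambda>t p. f (p, lm)" and \<rho>=1 and e=0])
    show "((\<lambda>v. \<phi> (v - s) (\<phi> s y)) has_vector_derivative f (\<phi> (v - s) (\<phi> s y), lm)) (at v)" for v
      by (rule phid_shift)
    show "((\<lambda>t. \<phi> t y) has_vector_derivative f (\<phi> v y, lm)) (at v)" for v by (rule phid)
    show "norm (f (p, lm) - f (\<phi> u y, lm)) \<le> L * norm (p - \<phi> u y) + 0"
      if "u \<in> {s..s+t}" "norm (p - \<phi> u y) \<le> 1" for u p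
    proof -
      have "norm p \<le> norm (\<phi> u y) + norm (p - \<phi> u y)" by (metis norm_triangle_sub add.commute)
      then have "p \<in> cball 0 (R0+1)" using R0[OF that(1)] that(2) by simp
      moreover have "\<phi> u y \<in> cball 0 (R0+1)" using R0[OF that(1)] by simp
      ultimately show ?thesis using L(2) by simp
    qed
    show "norm ((\<lambda>v. \<phi> (v - s) (\<phi> s y)) s - \<phi> s y) < C" using C by (simp add: phi0)
    show "C * exp ((L+2)*((s+t)-s)) \<le> 1" using Cb by simp
  qed (use C L t in auto)
  also have "\<dots> \<le> min d 1" using Cb by simp
  finally show False unfolding d_def by (simp add: add.commute)
qed

lemma bound_K:
  assumes K: "compact K" and T: "T \<ge> 0"
  shows "\<exists>R. \<forall>z\<in>K. \<forall>t\<in>{0..T}. norm (\<phi> t z) \<le> R"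
proof (rule compact_uniform[OF K])
  fix y assume "y \<in> K"
  obtain R0 where R0: "\<And>t. t \<in> {0..T} \<Longrightarrow> norm (\<phi> t y) \<le> R0" using traj_bound by blast
  obtain \<nu> where \<nu>: "\<nu> > 0" "\<And>z. norm (z - y) < \<nu> \<Longrightarrow> \<forall>t\<in>{0..T}. norm (\<phi> t z - \<phi> t y) < 1"
    using cont_dep[OF T, of 1 y] by auto
  show "\<exists>\<nu>>0. \<exists>c. \<forall>z\<in>K. dist z y < \<nu> \<longrightarrow> (\<forall>t\<in>{0..T}. norm (\<phi> t z) \<le> c)"
  proof -
    have "\<forall>z\<in>K. dist z y < \<nu> \<longrightarrow> (\<forall>t\<in>{0..T}. norm (\<phi> t z) \<le> R0 + 1)"
    proof (intro ballI impI)
    fix z t assume "z \<in> K" "dist z y < \<nu>" "t \<in> {0..T}"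
    then have "norm (\<phi> t z - \<phi> t y) < 1" using \<nu>(2) by (simp add: dist_norm)
    moreover have "norm (\<phi> t z) \<le> norm (\<phi> t y) + norm (\<phi> t z - \<phi> t y)" by (metis norm_triangle_sub add.commute)
    ultimately show "norm (\<phi> t z) \<le> R0 + 1" using R0[OF \<open>t \<in> {0..T}\<close>] by simp
    qed
    then show ?thesis using \<nu>(1) by blast
  qed
next
  fix c c' :: real and z assume "c \<le> c'" "\<forall>t\<in>{0..T}. norm (\<phi> t z) \<le> c"
  then show "\<forall>t\<in>{0..T}. norm (\<phi> t z) \<le> c'" by force
qed

end

lemma nbhd_eq: "nbhd \<eta> M = {x. infdist x M < \<eta>}"
  unfolding nbhd_def semidist_def by simp

lemma compact_K:
  fixes A :: "'b::euclidean_space set"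
  assumes "compact A" "A \<noteq> {}"
  shows "compact {x. infdist x A \<le> c}"
proof -
  obtain M where M: "\<And>a. a \<in> A \<Longrightarrow> norm a \<le> M" using compact_imp_bounded[OF assms(1)] bounded_iff by metis
  have "bounded {x. infdist x A \<le> c}"
    unfolding bounded_iff
  proof (intro exI[of _ "M + c"] ballI)
    fix x assume "x \<in> {x. infdist x A \<le> c}"
    moreover obtain a where "a \<in> A" "infdist x A = dist x a"
      using infdist_attains_inf[OF compact_imp_closed[OF assms(1)] assms(2)] by metis
    moreover have "norm x \<le> norm a + dist x a" by (metis dist_norm norm_triangle_sub add.commute)
    ultimately show "norm x \<le> M + c" using M by fastforce
  qed
  moreover have "closed {x. infdist x A \<le> c}"
    by (intro closed_Collect_le continuous_intros)
  ultimately show ?thesis by (simp add: compact_eq_bounded_closed)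
qed

locale setting2 = setting f lm \<phi> for f :: "'a::euclidean_space \<times> real \<Rightarrow> 'a" and lm \<phi> +
  fixes A :: "'a set" and \<Lambda> :: "real \<Rightarrow> real" and r :: real and \<Phi> :: "real \<Rightarrow> real \<Rightarrow> 'a \<Rightarrow> 'a"
  assumes asym: "asymptotically_stable \<phi> A"
    and Lam: "(\<Lambda> \<longlongrightarrow> lm) at_bot"
    and r: "r > 0"
    and coc: "is_solution_cocycle (\<lambda>t x. f (x, \<Lambda> (r * t))) \<Phi>"
begin

lemma A_props: "A \<noteq> {}" "compact A"
  using asym unfolding asymptotically_stable_def by auto

lemma stab: assumes "\<epsilon> > 0" shows "\<exists>\<delta>>0. \<delta> \<le> \<epsilon> \<and> (\<forall>t\<ge>0. \<forall>y. infdist y A < \<delta> \<longrightarrow> infdist (\<phi> t y) A < \<epsilon>)"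
proof -
  obtain \<delta> where d: "\<delta> > 0" "\<And>t y. t > 0 \<Longrightarrow> infdist y A < \<delta> \<Longrightarrow> infdist (\<phi> t y) A < \<epsilon>"
  proof -
    have "\<forall>\<epsilon>>0. \<exists>\<delta>>0. \<forall>t>0. \<forall>y. infdist y A < \<delta> \<longrightarrow> infdist (\<phi> t y) A < \<epsilon>"
      using asym unfolding asymptotically_stable_def nbhd_eq semidist_def by auto
    then show ?thesis using assms that by blast
  qed
  show ?thesis
  proof (intro exI[of _ "min \<delta> \<epsilon>"] conjI allI impI)
    fix t :: real and y assume "t \<ge> 0" "infdist y A < min \<delta> \<epsilon>"
    then show "infdist (\<phi> t y) A < \<epsilon>" using d(2)[of t y] by (cases "t = 0") (auto simp: phi0)
  qed (use d assms in auto)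
qed

lemma attr: "\<exists>\<eta>0>0. \<forall>y. infdist y A < \<eta>0 \<longrightarrow> ((\<lambda>t. infdist (\<phi> t y) A) \<longlongrightarrow> 0) at_top"
  using asym unfolding asymptotically_stable_def nbhd_eq semidist_def by auto

lemma UA:
  assumes K: "compact K" and KB: "\<And>y. y \<in> K \<Longrightarrow> ((\<lambda>t. infdist (\<phi> t y) A) \<longlongrightarrow> 0) at_top"
    and e: "\<epsilon> > 0"
  shows "\<exists>T. \<forall>z\<in>K. \<forall>t\<ge>T. infdist (\<phi> t z) A < \<epsilon>"
proof (rule compact_uniform[OF K])
  fix y assume y: "y \<in> K"
  obtain \<delta>2 where d2: "\<delta>2 > 0" "\<And>t y. t \<ge> 0 \<Longrightarrow> infdist y A < \<delta>2 \<Longrightarrow> infdist (\<phi> t y) A < \<epsilon>"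
    using stab[OF e] by auto
  have "eventually (\<lambda>t. infdist (\<phi> t y) A < \<delta>2/2) at_top"
    using order_tendstoD(2)[OF KB[OF y], of "\<delta>2/2"] d2(1) by simp
  then obtain N where N: "\<And>t. t \<ge> N \<Longrightarrow> infdist (\<phi> t y) A < \<delta>2/2"
    unfolding eventually_at_top_linorder by blast
  define ty where "ty = max N 0"
  have ty: "ty \<ge> 0" "infdist (\<phi> ty y) A < \<delta>2/2" using N unfolding ty_def by auto
  obtain \<nu> where \<nu>: "\<nu> > 0" "\<And>z. norm (z - y) < \<nu> \<Longrightarrow> \<forall>t\<in>{0..ty}. norm (\<phi> t z - \<phi> t y) < \<delta>2/2"
    using cont_dep[OF ty(1), of "\<delta>2/2" y] d2(1) by auto
  have "\<forall>z\<in>K. dist z y < \<nu> \<longrightarrow> (\<forall>t\<ge>ty. infdist (\<phi> t z) A < \<epsilon>)"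
  proof (intro ballI impI allI)
    fix z t assume z: "z \<in> K" "dist z y < \<nu>" and t: "t \<ge> ty"
    have "norm (\<phi> ty z - \<phi> ty y) < \<delta>2/2" using \<nu>(2)[of z] z(2) ty(1) by (simp add: dist_norm)
    then have "infdist (\<phi> ty z) A < \<delta>2"
      using infdist_triangle[of "\<phi> ty z" A "\<phi> ty y"] ty(2) by (simp add: dist_norm)
    then have "infdist (\<phi> (t - ty) (\<phi> ty z)) A < \<epsilon>" using d2(2) t by simp
    also have "\<phi> (t - ty) (\<phi> ty z) = \<phi> t z" using flow_prop[OF ty(1), of "t - ty" z] t by simp
    finally show "infdist (\<phi> t z) A < \<epsilon>" .
  qed
  then show "\<exists>\<nu>>0. \<exists>c. \<forall>z\<in>K. dist z y < \<nu> \<longrightarrow> (\<forall>t\<ge>c. infdist (\<phi> t z) A < \<epsilon>)"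
    using \<nu>(1) by blast
next
  fix c c' :: real and z assume "c \<le> c'" "\<forall>t\<ge>c. infdist (\<phi> t z) A < \<epsilon>"
  then show "\<forall>t\<ge>c'. infdist (\<phi> t z) A < \<epsilon>" by force
qed

lemma Phid: "((\<lambda>t. \<Phi> t s x) has_vector_derivative f (\<Phi> t s x, \<Lambda> (r * t))) (at t)"
  using coc unfolding is_solution_cocycle_def by blast

lemma Phi0: "\<Phi> s s x = x"
  using coc unfolding is_solution_cocycle_def by blast


lemma compare:
  assumes K: "compact K" and T1: "T1 > 0" and g: "\<gamma> > 0"
  shows "\<exists>\<tau>>0. \<forall>a u y X. y \<in> K \<longrightarrow> a \<le> u \<longrightarrow> u \<le> a + T1 \<longrightarrow> u < - \<tau> \<longrightarrow>
           (\<forall>v. (X has_vector_derivative f (X v, \<Lambda> (r * v))) (at v)) \<longrightarrow> X a = y \<longrightarrow>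
           norm (X u - \<phi> (u - a) y) < \<gamma>"
proof -
  obtain R where R: "\<And>z t. z \<in> K \<Longrightarrow> t \<in> {0..T1} \<Longrightarrow> norm (\<phi> t z) \<le> R"
    using bound_K[OF K, of T1] T1 by (metis less_eq_real_def)
  obtain L where L: "L \<ge> 0" "\<And>p q. p \<in> cball 0 (R+1) \<Longrightarrow> q \<in> cball 0 (R+1) \<Longrightarrow> norm (f (p, lm) - f (q, lm)) \<le> L * norm (p - q)"
    using lip by blast
  define C where "C = min \<gamma> 1 * exp (- ((L+2)*T1))"
  have C: "C > 0" using g unfolding C_def by simp
  have Cb: "C * exp ((L+2)*t) \<le> min \<gamma> 1" if "t \<le> T1" for t
    unfolding C_def using exp_bound[OF L(1) that, of "min \<gamma> 1"] g by simp
  define S where "S = cball (0::'a) (R+1) \<times> cball lm 1"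
  have "uniformly_continuous_on S f"
    unfolding S_def by (intro compact_uniformly_continuous continuous_on_subset[OF f_cont] compact_Times compact_cball) auto
  then obtain \<theta> where th: "\<theta> > 0" "\<And>x x'. x \<in> S \<Longrightarrow> x' \<in> S \<Longrightarrow> dist x' x < \<theta> \<Longrightarrow> dist (f x') (f x) < C"
    unfolding uniformly_continuous_on_def using C by metis
  have "eventually (\<lambda>w. dist (\<Lambda> w) lm < min \<theta> 1) at_bot"
    using tendstoD[OF Lam, of "min \<theta> 1"] th(1) by simp
  then obtain M where M: "\<And>w. w \<le> M \<Longrightarrow> dist (\<Lambda> w) lm < min \<theta> 1"
    unfolding eventually_at_bot_linorder by blast
  define \<tau> where "\<tau> = max 1 (- M / r)"
  have tau: "\<tau> > 0" unfolding \<tau>_def by simp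
  have Lv: "dist (\<Lambda> (r * v)) lm < min \<theta> 1" if "v < - \<tau>" for v
  proof -
    have "v < M / r" using that unfolding \<tau>_def by (auto simp: max_def split: if_splits)
    then have "r * v < M" using r by (simp add: field_simps)
    then show ?thesis using M by simp
  qed
  show ?thesis
  proof (intro exI[of _ \<tau>] conjI tau allI impI)
    fix a u y X
    assume y: "y \<in> K" and au: "a \<le> u" "u \<le> a + T1" "u < - \<tau>"
      and dX: "\<forall>v. (X has_vector_derivative f (X v, \<Lambda> (r * v))) (at v)" and Xa: "X a = y"
    have "norm (X u - (\<lambda>v. \<phi> (v - a) y) u) < C * exp ((L+2)*(u-a))"
    proof (rule gronwall_core[where F="\<lambda>t p. f (p, \<Lambda> (r * t))" and G="\<lambda>t p. f (p, lm)" and \<rho>=1 and e=C])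
      show "a \<le> u" by fact
      show "0 \<le> C" "C \<le> C" using C by auto
      show "(X has_vector_derivative f (X v, \<Lambda> (r * v))) (at v)" for v using dX by blast
      show "((\<lambda>v. \<phi> (v - a) y) has_vector_derivative f (\<phi> (v - a) y, lm)) (at v)" for v
        by (rule phid_shift)
      show "norm (f (p, \<Lambda> (r * v)) - f (\<phi> (v - a) y, lm)) \<le> L * norm (p - \<phi> (v - a) y) + C"
        if v: "v \<in> {a..u}" and p: "norm (p - \<phi> (v - a) y) \<le> 1" for v p
      proof -
        have Rv: "norm (\<phi> (v - a) y) \<le> R" using R[OF y, of "v - a"] v au by auto
        have "norm p \<le> norm (\<phi> (v - a) y) + norm (p - \<phi> (v - a) y)" by (metis norm_triangle_sub add.commute)
        then have pS: "p \<in> cball 0 (R+1)" using Rv p by simp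
        have "dist (\<Lambda> (r * v)) lm < min \<theta> 1" using Lv[of v] v au by auto
        then have lam: "dist (p, \<Lambda> (r * v)) (p, lm) < \<theta>" "\<Lambda> (r * v) \<in> cball lm 1"
          by (auto simp: dist_Pair_Pair dist_commute)
        have "norm (f (p, \<Lambda> (r * v)) - f (p, lm)) < C"
          using th(2)[of "(p, lm)" "(p, \<Lambda> (r * v))"] pS lam unfolding S_def by (simp add: dist_norm)
        moreover have "norm (f (p, lm) - f (\<phi> (v - a) y, lm)) \<le> L * norm (p - \<phi> (v - a) y)"
          using L(2) pS Rv by simp
        moreover have "norm (f (p, \<Lambda> (r * v)) - f (\<phi> (v - a) y, lm)) \<le> norm (f (p, \<Lambda> (r * v)) - f (p, lm)) + norm (f (p, lm) - f (\<phi> (v - a) y, lm))"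
          using norm_triangle_ineq[of "f (p, \<Lambda> (r * v)) - f (p, lm)" "f (p, lm) - f (\<phi> (v - a) y, lm)"] by simp
        ultimately show ?thesis by simp
      qed
      show "norm (X a - (\<lambda>v. \<phi> (v - a) y) a) < C" using C Xa by (simp add: phi0)
      show "C * exp ((L+2)*(u-a)) \<le> 1" using Cb[of "u - a"] au by simp
    qed (use C L au in auto)
    also have "\<dots> \<le> min \<gamma> 1" using Cb[of "u - a"] au by simp
    finally show "norm (X u - \<phi> (u - a) y) < \<gamma>" by simp
  qed
qed


lemma main:
  "\<exists>\<eta>t>0. \<forall>\<eta>\<in>{0<..\<eta>t}. \<forall>\<delta>>0. \<exists>\<tau>>0. \<exists>\<tau>t>0.
     \<forall>t s. s < t - \<tau>t \<and> t < - \<tau> \<longrightarrow> \<Phi> t s ` nbhd \<eta> A \<subseteq> nbhd \<delta> A"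
proof -
  obtain \<eta>0 where e0: "\<eta>0 > 0" "\<And>y. infdist y A < \<eta>0 \<Longrightarrow> ((\<lambda>t. infdist (\<phi> t y) A) \<longlongrightarrow> 0) at_top"
    using attr by blast
  define \<eta>t where "\<eta>t = \<eta>0 / 2"
  define K where "K = {x. infdist x A \<le> \<eta>t}"
  have K: "compact K" unfolding K_def using compact_K A_props by blast
  have KB: "((\<lambda>t. infdist (\<phi> t y) A) \<longlongrightarrow> 0) at_top" if "y \<in> K" for y
    using that e0 unfolding K_def \<eta>t_def by auto
  have "\<forall>\<eta>\<in>{0<..\<eta>t}. \<forall>\<delta>>0. \<exists>\<tau>>0. \<exists>\<tau>t>0.
     \<forall>t s. s < t - \<tau>t \<and> t < - \<tau> \<longrightarrow> \<Phi> t s ` nbhd \<eta> A \<subseteq> nbhd \<delta> A"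
  proof (intro ballI allI impI)
    fix \<eta> \<delta> :: real assume eta: "\<eta> \<in> {0<..\<eta>t}" and d: "\<delta> > 0"
    define \<epsilon> where "\<epsilon> = min \<delta> \<eta>t / 2"
    have eps: "\<epsilon> > 0" "\<epsilon> \<le> \<delta>/2" "\<epsilon> \<le> \<eta>t" using d e0(1) unfolding \<epsilon>_def \<eta>t_def by auto
    obtain \<delta>1 where d1: "\<delta>1 > 0" "\<delta>1 \<le> \<epsilon>" "\<And>t y. t \<ge> 0 \<Longrightarrow> infdist y A < \<delta>1 \<Longrightarrow> infdist (\<phi> t y) A < \<epsilon>"
      using stab[OF eps(1)] by blast
    obtain T where T: "\<And>z t. z \<in> K \<Longrightarrow> t \<ge> T \<Longrightarrow> infdist (\<phi> t z) A < \<delta>1/2"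
      using UA[OF K KB, of "\<delta>1/2"] d1(1) by auto
    define T1 where "T1 = max T 0 + 1"
    have T1: "T1 > 0" "T1 \<ge> T" unfolding T1_def by auto
    obtain \<tau> where tau: "\<tau> > 0" and cmp: "\<And>a u y X. y \<in> K \<Longrightarrow> a \<le> u \<Longrightarrow> u \<le> a + T1 \<Longrightarrow> u < - \<tau> \<Longrightarrow>
           (\<forall>v. (X has_vector_derivative f (X v, \<Lambda> (r * v))) (at v)) \<Longrightarrow> X a = y \<Longrightarrow>
           norm (X u - \<phi> (u - a) y) < \<delta>1/2"
      using compare[OF K T1(1), of "\<delta>1/2"] d1(1) by auto
    have "\<forall>t s. s < t - T1 \<and> t < - \<tau> \<longrightarrow> \<Phi> t s ` nbhd \<eta> A \<subseteq> nbhd \<delta> A"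
    proof (intro allI impI subsetI)
      fix t s z assume ts: "s < t - T1 \<and> t < - \<tau>" and z: "z \<in> \<Phi> t s ` nbhd \<eta> A"
      then obtain x where x: "infdist x A < \<eta>" and zx: "z = \<Phi> t s x" unfolding nbhd_eq by auto
      define X where "X = (\<lambda>v. \<Phi> v s x)"
      have dX: "\<forall>v. (X has_vector_derivative f (X v, \<Lambda> (r * v))) (at v)" unfolding X_def using Phid by blast
      have Xs: "X s = x" unfolding X_def by (rule Phi0)
      have inK: "w \<in> K" if "infdist w A < \<delta>1" for w using that d1(2) eps unfolding K_def by auto
      have step: "infdist (X (a + T1)) A < \<delta>1" if "a + T1 \<le> t" "X a \<in> K" for a
      proof -
        have "norm (X (a + T1) - \<phi> ((a + T1) - a) (X a)) < \<delta>1/2"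
          by (rule cmp[OF that(2) _ _ _ dX]) (use that ts T1 in auto)
        moreover have "infdist (\<phi> T1 (X a)) A < \<delta>1/2" using T[OF that(2) T1(2)] .
        ultimately show ?thesis using infdist_triangle[of "X (a + T1)" A "\<phi> T1 (X a)"] by (simp add: dist_norm)
      qed
      have claim: "k \<ge> 1 \<Longrightarrow> s + real k * T1 \<le> t \<Longrightarrow> infdist (X (s + real k * T1)) A < \<delta>1" for k :: nat
      proof (induction k)
        case 0 then show ?case by simp
      next
        case (Suc k)
        show ?case
        proof (cases "k = 0")
          case True
          have "X s \<in> K" using Xs x eta unfolding K_def by auto
          then show ?thesis using step[of s] Suc.prems True by simp
        next
          case False
          have le: "s + real k * T1 \<le> t" using Suc.prems T1 by (simp add: algebra_simps)
          have "X (s + real k * T1) \<in> K" using Suc.IH[OF _ le] False by (intro inK) simp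
          moreover have "s + real k * T1 + T1 \<le> t" using Suc.prems by (simp add: algebra_simps)
          ultimately have "infdist (X (s + real k * T1 + T1)) A < \<delta>1" using step by blast
          then show ?thesis by (simp add: algebra_simps)
        qed
      qed
      define q where "q = (t - s) / T1"
      have q1: "q > 1" unfolding q_def using ts T1 by (simp add: field_simps)
      define n where "n = nat \<lfloor>q\<rfloor>"
      have rn: "real n = of_int \<lfloor>q\<rfloor>" unfolding n_def using q1 by simp
      have n1: "n \<ge> 1" unfolding n_def using q1 by linarith
      have nq: "real n \<le> q" "q < real n + 1" unfolding rn by linarith+
      have sn: "s + real n * T1 \<le> t" "t \<le> s + real n * T1 + T1"
        using nq T1(1) unfolding q_def by (simp_all add: field_simps)
      define a where "a = s + real n * T1"
      have Xa: "infdist (X a) A < \<delta>1" unfolding a_def using claim[OF n1 sn(1)] .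
      have "norm (X t - \<phi> (t - a) (X a)) < \<delta>1/2"
        by (rule cmp[OF inK[OF Xa] _ _ _ dX]) (use sn ts a_def in auto)
      moreover have "infdist (\<phi> (t - a) (X a)) A < \<epsilon>" using d1(3)[OF _ Xa] sn unfolding a_def by simp
      ultimately have "infdist (X t) A < \<epsilon> + \<delta>1/2"
        using infdist_triangle[of "X t" A "\<phi> (t - a) (X a)"] by (simp add: dist_norm)
      then have "infdist z A < \<delta>" using zx d1(2) eps unfolding X_def by simp
      then show "z \<in> nbhd \<delta> A" unfolding nbhd_eq by simp
    qed
    then show "\<exists>\<tau>>0. \<exists>\<tau>t>0. \<forall>t s. s < t - \<tau>t \<and> t < - \<tau> \<longrightarrow> \<Phi> t s ` nbhd \<eta> A \<subseteq> nbhd \<delta> A"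
      using tau T1(1) by blast
  qed
  then show ?thesis using e0(1) unfolding \<eta>t_def by (intro exI[of _ "\<eta>0/2"]) auto
qed

end


theorem lemma2p3:
  fixes f :: "'a::euclidean_space \<times> real \<Rightarrow> 'a"
    and \<Lambda> :: "real \<Rightarrow> real"
    and lm lp r :: real
    and \<Phi> :: "real \<Rightarrow> real \<Rightarrow> 'a \<Rightarrow> 'a"
    and \<phi> :: "real \<Rightarrow> 'a \<Rightarrow> 'a"
    and A :: "'a set"
  assumes "C1_map f"
    and "lm < lp"
    and "parameter_shift \<Lambda> lm lp"
    and "r > 0"
    and "is_solution_cocycle (\<lambda>t x. f (x, \<Lambda> (r * t))) \<Phi>"
    and "is_flow (\<lambda>x. f (x, lm)) \<phi>"
    and "asymptotically_stable \<phi> A"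
  shows "\<exists>\<eta>t>0. \<forall>\<eta>\<in>{0<..\<eta>t}. \<forall>\<delta>>0. \<exists>\<tau>>0. \<exists>\<tau>t>0.
           \<forall>t s. s < t - \<tau>t \<and> t < - \<tau> \<longrightarrow> \<Phi> t s ` nbhd \<eta> A \<subseteq> nbhd \<delta> A"
proof -
  interpret setting2 f lm \<phi> A \<Lambda> r \<Phi>
    by unfold_locales (use assms in \<open>auto simp: parameter_shift_def\<close>)
  show ?thesis by (rule main)
qed

end
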